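(* Let $\varphi:[0,\infty)\to[0,\infty)$ be measurable with $\int_0^\infty\varphi=1$, $F(x)=\int_0^x\varphi$, and assume that for some $\alpha\in(0,1)$ and $K>0$, $\lim_{x\to\infty}\alpha x^\alpha(1-F(x))=K$. Let $\delta=K\Gamma(1-\alpha)/\alpha$. Let $(a_n)$ be a sequence with $a_n>1$, $a_n\to1$ and $n^\alpha(a_n-1)\to\lambda\delta$ for some $\lambda>0$. Let $b_n>0$ be the unique positive number with $\int_0^\infty e^{-b_ns}a_n\varphi(s)\,ds=1/a_n$. Then $$\lim_{n\to\infty}nb_n=(2\lambda)^{1/\alpha}.$$ *)

theory Defs
  imports "HOL-Analysis.Analysis"
begin

end

theory Submission imports Defs begin

context
  fixes \<phi> :: "real \<Rightarrow> real"
  assumes meas: "set_borel_measurable lborel {0..} \<phi>"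
    and nonneg: "\<And>x. x \<ge> 0 \<Longrightarrow> \<phi> x \<ge> 0"
    and int1: "set_integrable lborel {0..} \<phi>"
    and int2: "(LINT s:{0..}|lborel. \<phi> s) = 1"
begin

definition Pf :: "real \<Rightarrow> real" where "Pf s = indicator {0..} s * \<phi> s"

lemma Pf_meas[measurable]: "Pf \<in> borel_measurable borel"
proof -
  have "Pf \<in> borel_measurable lborel" using meas unfolding set_borel_measurable_def Pf_def[abs_def] by simp
  then show ?thesis by simp
qed

lemma Pf_nonneg: "Pf s \<ge> 0"
  using nonneg by (auto simp: Pf_def indicator_def)

lemma Pf_int: "integrable lborel Pf"
  using int1 unfolding set_integrable_def Pf_def[abs_def] by simp

lemma Pf_int1: "integral\<^sup>L lborel Pf = 1"
  using int2 unfolding set_lebesgue_integral_def Pf_def[abs_def] by simp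

lemma Pf_nn: "(\<integral>\<^sup>+ s. ennreal (Pf s) \<partial>lborel) = 1"
  using nn_integral_eq_integral[OF Pf_int] Pf_nonneg Pf_int1 by simp

definition Gn :: "real \<Rightarrow> ennreal" where
  "Gn t = (\<integral>\<^sup>+ s. ennreal (Pf s * indicator {t<..} s) \<partial>lborel)"

lemma Gn_meas[measurable]: "Gn \<in> borel_measurable borel"
proof -
  have "(\<lambda>t. \<integral>\<^sup>+ s. ennreal (Pf s * indicator {t<..} s) \<partial>lborel) \<in> borel_measurable lborel"
    by (auto simp: case_prod_unfold indicator_def cong: measurable_cong_sets)
  then show ?thesis unfolding Gn_def[abs_def] by simp
qed

lemma Gn_F:
  assumes t: "t \<ge> 0"
  shows "enn2real (Gn t) + (LINT s:{0..t}|lborel. \<phi> s) = 1" and "Gn t = ennreal (enn2real (Gn t))"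
    and "enn2real (Gn t) \<ge> 0"
proof -
  have i1: "integrable lborel (\<lambda>s. indicator {t<..} s * Pf s)"
    using integrable_mult_indicator[OF _ Pf_int] by simp
  have i2: "integrable lborel (\<lambda>s. indicator {0..t} s * Pf s)"
    using integrable_mult_indicator[OF _ Pf_int] by simp
  have "Pf s = indicator {0..t} s * Pf s + indicator {t<..} s * Pf s" for s
    using t by (auto simp: indicator_def Pf_def)
  then have "1 = integral\<^sup>L lborel (\<lambda>s. indicator {0..t} s * Pf s + indicator {t<..} s * Pf s)"
    using Pf_int1 by simp
  also have "\<dots> = integral\<^sup>L lborel (\<lambda>s. indicator {0..t} s * Pf s) + integral\<^sup>L lborel (\<lambda>s. indicator {t<..} s * Pf s)"
    by (rule Bochner_Integration.integral_add[OF i2 i1])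
  also have "integral\<^sup>L lborel (\<lambda>s. indicator {0..t} s * Pf s) = (LINT s:{0..t}|lborel. \<phi> s)"
    unfolding set_lebesgue_integral_def by (rule Bochner_Integration.integral_cong) (auto simp: Pf_def indicator_def)
  finally have e1: "1 = (LINT s:{0..t}|lborel. \<phi> s) + integral\<^sup>L lborel (\<lambda>s. indicator {t<..} s * Pf s)" .
  have "Gn t = ennreal (integral\<^sup>L lborel (\<lambda>s. indicator {t<..} s * Pf s))"
    unfolding Gn_def using nn_integral_eq_integral[OF i1] Pf_nonneg by (simp add: mult.commute)
  moreover have nn: "integral\<^sup>L lborel (\<lambda>s. indicator {t<..} s * Pf s) \<ge> 0"
    using Pf_nonneg by (intro Bochner_Integration.integral_nonneg) auto
  ultimately have "enn2real (Gn t) = integral\<^sup>L lborel (\<lambda>s. indicator {t<..} s * Pf s)" by simp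
  then show "enn2real (Gn t) + (LINT s:{0..t}|lborel. \<phi> s) = 1" "Gn t = ennreal (enn2real (Gn t))"
    "enn2real (Gn t) \<ge> 0"
    using e1 nn \<open>Gn t = _\<close> by auto
qed

lemma inner_int:
  assumes c: "c > 0"
  shows "ennreal ((1 - exp (- c * s)) * Pf s) =
    (\<integral>\<^sup>+ t. ennreal (indicator {0<..} t * c * exp (- c * t) * (Pf s * indicator {t<..} s)) \<partial>lborel)"
proof (cases "s > 0")
  case False
  then have "indicator {0<..} t * c * exp (- c * t) * (Pf s * indicator {t<..} s) = 0" for t
    by (auto simp: indicator_def)
  have "(\<lambda>t. ennreal (indicator {0<..} t * c * exp (- c * t) * (Pf s * indicator {t<..} s))) = (\<lambda>t. 0)"
    using False by (intro ext) (auto simp: indicator_def)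
  moreover have "(1 - exp (- c * s)) * Pf s = 0"
    using False by (cases "s = 0") (auto simp: Pf_def indicator_def)
  ultimately show ?thesis by (simp only:) simp
next
  case True
  have "((\<lambda>t. c * exp (- c * t)) has_integral ((- exp (- c * s)) - (- exp (- c * 0)))) {0..s}"
  proof (rule fundamental_theorem_of_calculus)
    show "0 \<le> s" using True by simp
    fix x assume "x \<in> {0..s}"
    have "((\<lambda>t. - exp (- c * t)) has_real_derivative c * exp (- c * x)) (at x within {0..s})"
      by (auto intro!: derivative_eq_intros)
    then show "((\<lambda>t. - exp (- c * t)) has_vector_derivative c * exp (- c * x)) (at x within {0..s})"
      by (simp add: has_real_derivative_iff_has_vector_derivative)
  qed
  then have "((\<lambda>t. c * exp (- c * t)) has_integral (1 - exp (- c * s))) {0<..<s}"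
    by (simp add: has_integral_open_interval[of _ _ 0 s, unfolded box_real cbox_interval])
  note nn_integral_has_integral_lebesgue'[OF _ this]
  then have I: "(\<integral>\<^sup>+ t. ennreal (c * exp (- c * t)) * indicator {0<..<s} t \<partial>lborel) = ennreal (1 - exp (- c * s))"
    using c by auto
  have "(\<integral>\<^sup>+ t. ennreal (indicator {0<..} t * c * exp (- c * t) * (Pf s * indicator {t<..} s)) \<partial>lborel)
      = (\<integral>\<^sup>+ t. (ennreal (c * exp (- c * t)) * indicator {0<..<s} t) * ennreal (Pf s) \<partial>lborel)"
    using Pf_nonneg[of s] c by (intro nn_integral_cong) (auto simp: indicator_def ennreal_mult)
  also have "\<dots> = (\<integral>\<^sup>+ t. ennreal (c * exp (- c * t)) * indicator {0<..<s} t \<partial>lborel) * ennreal (Pf s)"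
    by (rule nn_integral_multc) auto
  also have "\<dots> = ennreal ((1 - exp (- c * s)) * Pf s)"
    using I Pf_nonneg[of s] True c by (simp add: ennreal_mult)
  finally show ?thesis by simp
qed

lemma fubini_step:
  assumes c: "c > 0"
  shows "(\<integral>\<^sup>+ s. ennreal ((1 - exp (- c * s)) * Pf s) \<partial>lborel) =
    (\<integral>\<^sup>+ t. ennreal (indicator {0<..} t * c * exp (- c * t)) * Gn t \<partial>lborel)"
proof -
  have "(\<integral>\<^sup>+ s. ennreal ((1 - exp (- c * s)) * Pf s) \<partial>lborel) =
     (\<integral>\<^sup>+ s. \<integral>\<^sup>+ t. ennreal (indicator {0<..} t * c * exp (- c * t) * (Pf s * indicator {t<..} s)) \<partial>lborel \<partial>lborel)"
    using inner_int[OF c] by simp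
  also have "\<dots> = (\<integral>\<^sup>+ t. \<integral>\<^sup>+ s. ennreal (indicator {0<..} t * c * exp (- c * t) * (Pf s * indicator {t<..} s)) \<partial>lborel \<partial>lborel)"
    by (subst lborel_pair.Fubini') (auto simp: case_prod_unfold indicator_def cong: measurable_cong_sets)
  also have "\<dots> = (\<integral>\<^sup>+ t. ennreal (indicator {0<..} t * c * exp (- c * t)) * Gn t \<partial>lborel)"
  proof (rule nn_integral_cong)
    fix t
    have "(\<integral>\<^sup>+ s. ennreal (indicator {0<..} t * c * exp (- c * t) * (Pf s * indicator {t<..} s)) \<partial>lborel)
       = (\<integral>\<^sup>+ s. ennreal (indicator {0<..} t * c * exp (- c * t)) * ennreal (Pf s * indicator {t<..} s) \<partial>lborel)"
      using c Pf_nonneg by (intro nn_integral_cong) (auto simp: ennreal_mult' indicator_def)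
    also have "\<dots> = ennreal (indicator {0<..} t * c * exp (- c * t)) * Gn t"
      unfolding Gn_def by (rule nn_integral_cmult) auto
    finally show "(\<integral>\<^sup>+ s. ennreal (indicator {0<..} t * c * exp (- c * t) * (Pf s * indicator {t<..} s)) \<partial>lborel)
       = ennreal (indicator {0<..} t * c * exp (- c * t)) * Gn t" .
  qed
  finally show ?thesis .
qed

definition Gr :: "real \<Rightarrow> real" where "Gr t = enn2real (Gn t)"

lemma Gr_meas[measurable]: "Gr \<in> borel_measurable borel"
  unfolding Gr_def[abs_def] by measurable

lemma Gn_le1: "Gn t \<le> 1"
proof -
  have "Gn t \<le> (\<integral>\<^sup>+ s. ennreal (Pf s) \<partial>lborel)"
    unfolding Gn_def using Pf_nonneg by (intro nn_integral_mono) (auto simp: indicator_def)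
  then show ?thesis using Pf_nn by simp
qed

lemma Gn_Gr: "Gn t = ennreal (Gr t)"
proof -
  have "Gn t < top" using Gn_le1[of t] ennreal_one_less_top by (rule le_less_trans)
  then show ?thesis unfolding Gr_def by simp
qed

lemma Gr_bounds: "0 \<le> Gr t" "Gr t \<le> 1"
proof -
  show "0 \<le> Gr t" unfolding Gr_def by simp
  have "ennreal (Gr t) \<le> 1" using Gn_le1[of t] unfolding Gn_Gr .
  then show "Gr t \<le> 1" by simp
qed

definition L :: "real \<Rightarrow> real" where "L c = (LINT s:{0..}|lborel. exp (- c * s) * \<phi> s)"

lemma Q_nn:
  assumes c: "c > 0"
  shows "(\<integral>\<^sup>+ s. ennreal ((1 - exp (- c * s)) * Pf s) \<partial>lborel) = ennreal (1 - L c)" and "0 \<le> 1 - L c"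
proof -
  have ie: "integrable lborel (\<lambda>s. exp (- c * s) * Pf s)"
  proof (rule Bochner_Integration.integrable_bound[OF Pf_int])
    show "(\<lambda>s. exp (- c * s) * Pf s) \<in> borel_measurable lborel" by measurable
    show "AE x in lborel. norm (exp (- c * x) * Pf x) \<le> norm (Pf x)"
    proof (intro AE_I2)
      fix x
      show "norm (exp (- c * x) * Pf x) \<le> norm (Pf x)"
      proof (cases "x \<ge> 0")
        case True
        then have "exp (- c * x) \<le> 1" using c by simp
        then show ?thesis using Pf_nonneg[of x] by (simp add: mult_left_le_one_le)
      qed (simp add: Pf_def indicator_def)
    qed
  qed
  have "L c = integral\<^sup>L lborel (\<lambda>s. exp (- c * s) * Pf s)"
    unfolding L_def set_lebesgue_integral_def
    by (rule Bochner_Integration.integral_cong) (auto simp: Pf_def indicator_def)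
  then have "1 - L c = integral\<^sup>L lborel Pf - integral\<^sup>L lborel (\<lambda>s. exp (- c * s) * Pf s)"
    using Pf_int1 by simp
  also have "\<dots> = integral\<^sup>L lborel (\<lambda>s. (1 - exp (- c * s)) * Pf s)"
    using Bochner_Integration.integral_diff[OF Pf_int ie] by (simp add: algebra_simps)
  finally have e: "1 - L c = integral\<^sup>L lborel (\<lambda>s. (1 - exp (- c * s)) * Pf s)" .
  have nn: "0 \<le> (1 - exp (- c * s)) * Pf s" for s
  proof (cases "s \<ge> 0")
    case True
    then show ?thesis using c Pf_nonneg[of s] by simp
  qed (simp add: Pf_def)
  have i: "integrable lborel (\<lambda>s. (1 - exp (- c * s)) * Pf s)"
    using Bochner_Integration.integrable_diff[OF Pf_int ie] by (simp add: algebra_simps)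
  show "(\<integral>\<^sup>+ s. ennreal ((1 - exp (- c * s)) * Pf s) \<partial>lborel) = ennreal (1 - L c)"
    using nn_integral_eq_integral[OF i] nn e by simp
  show "0 \<le> 1 - L c" using e nn by (simp add: Bochner_Integration.integral_nonneg)
qed

lemma Q_scaled:
  assumes c: "c > 0"
  shows "ennreal (1 - L c) = (\<integral>\<^sup>+ u. ennreal (indicator {0<..} u * exp (- u) * Gr (u / c)) \<partial>lborel)"
proof -
  have "ennreal (1 - L c) = (\<integral>\<^sup>+ t. ennreal (indicator {0<..} t * c * exp (- c * t)) * Gn t \<partial>lborel)"
    using Q_nn(1)[OF c] fubini_step[OF c] by simp
  also have "\<dots> = (\<integral>\<^sup>+ t. ennreal (indicator {0<..} t * c * exp (- c * t) * Gr t) \<partial>lborel)"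
    using c Gr_bounds by (intro nn_integral_cong) (auto simp: Gn_Gr ennreal_mult' indicator_def)
  also have "\<dots> = ennreal \<bar>1 / c\<bar> * (\<integral>\<^sup>+ u. ennreal (indicator {0<..} (0 + 1 / c * u) * c * exp (- c * (0 + 1 / c * u)) * Gr (0 + 1 / c * u)) \<partial>lborel)"
    by (rule nn_integral_real_affine) (use c in auto)
  also have "(\<integral>\<^sup>+ u. ennreal (indicator {0<..} (0 + 1 / c * u) * c * exp (- c * (0 + 1 / c * u)) * Gr (0 + 1 / c * u)) \<partial>lborel)
     = (\<integral>\<^sup>+ u. ennreal c * ennreal (indicator {0<..} u * exp (- u) * Gr (u / c)) \<partial>lborel)"
  proof (rule nn_integral_cong)
    fix u :: real
    have e1: "0 + 1 / c * u = u / c" by simp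
    have e2: "c * (u / c) = u" using c by simp
    have e3: "indicator {0<..} (u / c) = (indicator {0<..} u :: real)"
      using c by (simp add: indicator_def zero_less_divide_iff)
    have nn: "0 \<le> indicator {0<..} u * exp (- u) * Gr (u / c)"
      using Gr_bounds(1)[of "u / c"] by simp
    have "ennreal c * ennreal (indicator {0<..} u * exp (- u) * Gr (u / c))
        = ennreal (c * (indicator {0<..} u * exp (- u) * Gr (u / c)))"
      using c nn by (simp add: ennreal_mult)
    then show "ennreal (indicator {0<..} (0 + 1 / c * u) * c * exp (- c * (0 + 1 / c * u)) * Gr (0 + 1 / c * u))
       = ennreal c * ennreal (indicator {0<..} u * exp (- u) * Gr (u / c))"
      unfolding e1 e2 e3 by (simp add: ac_simps)
  qed
  also have "\<dots> = ennreal c * (\<integral>\<^sup>+ u. ennreal (indicator {0<..} u * exp (- u) * Gr (u / c)) \<partial>lborel)"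
    by (rule nn_integral_cmult) measurable
  also have "ennreal \<bar>1 / c\<bar> * (ennreal c * (\<integral>\<^sup>+ u. ennreal (indicator {0<..} u * exp (- u) * Gr (u / c)) \<partial>lborel))
     = (ennreal (1 / c) * ennreal c) * (\<integral>\<^sup>+ u. ennreal (indicator {0<..} u * exp (- u) * Gr (u / c)) \<partial>lborel)"
    using c by (simp add: mult.assoc)
  also have "ennreal (1 / c) * ennreal c = 1"
    using c by (simp add: ennreal_mult[symmetric])
  finally show ?thesis by simp
qed

lemma gamma_int:
  fixes \<alpha> :: real
  assumes "0 < \<alpha>" "\<alpha> < 1"
  shows "integrable lborel (\<lambda>t. indicator {0..} t * t powr (- \<alpha>) / exp t)"
    and "integral\<^sup>L lborel (\<lambda>t. indicator {0..} t * t powr (- \<alpha>) / exp t) = Gamma (1 - \<alpha>)"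
proof -
  have g: "(\<integral>\<^sup>+ t. ennreal (indicator {0..} t * t powr (- \<alpha>) / exp t) \<partial>lborel) = ennreal (Gamma (1 - \<alpha>))"
    using Gamma_conv_nn_integral_real[of "1 - \<alpha>"] assms by simp
  have "0 \<le> Gamma (1 - \<alpha>)" using assms by (intro less_imp_le Gamma_real_pos) simp
  then have "integrable lborel (\<lambda>t. indicator {0..} t * t powr (- \<alpha>) / exp t) \<and>
      integral\<^sup>L lborel (\<lambda>t. indicator {0..} t * t powr (- \<alpha>) / exp t) = Gamma (1 - \<alpha>)"
    using g by (subst nn_integral_eq_integrable[symmetric]) auto
  then show "integrable lborel (\<lambda>t. indicator {0..} t * t powr (- \<alpha>) / exp t)"
    and "integral\<^sup>L lborel (\<lambda>t. indicator {0..} t * t powr (- \<alpha>) / exp t) = Gamma (1 - \<alpha>)" by auto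
qed

lemma key:
  assumes alpha: "0 < \<alpha>" "\<alpha> < 1"
    and tailG: "((\<lambda>x. x powr \<alpha> * Gr x) \<longlongrightarrow> C) at_top"
    and cpos: "\<And>n. c n > 0" and clim: "c \<longlonglongrightarrow> 0"
  shows "(\<lambda>n. (1 - L (c n)) / c n powr \<alpha>) \<longlonglongrightarrow> C * Gamma (1 - \<alpha>)"
proof -
  obtain X where X: "\<And>x. x \<ge> X \<Longrightarrow> x powr \<alpha> * Gr x \<le> C + 1"
  proof -
    have "eventually (\<lambda>x. x powr \<alpha> * Gr x < C + 1) at_top"
      using order_tendstoD(2)[OF tailG, of "C + 1"] by simp
    then show ?thesis using that unfolding eventually_at_top_linorder by (meson less_imp_le)
  qed
  define X' where "X' = max X 1"
  define M where "M = max (C + 1) (X' powr \<alpha>)"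
  have bnd: "x powr \<alpha> * Gr x \<le> M" if "x > 0" for x
  proof (cases "x \<ge> X'")
    case True
    then show ?thesis using X[of x] by (simp add: M_def X'_def)
  next
    case False
    have "x powr \<alpha> * Gr x \<le> x powr \<alpha> * 1"
      using Gr_bounds[of x] by (intro mult_left_mono) auto
    also have "\<dots> \<le> X' powr \<alpha>" using False that alpha powr_mono2[of \<alpha> x X'] by auto
    finally show ?thesis by (simp add: M_def)
  qed
  define g where "g = (\<lambda>t::real. indicator {0..} t * t powr (- \<alpha>) / exp t)"
  have gi: "integrable lborel g" and gI: "integral\<^sup>L lborel g = Gamma (1 - \<alpha>)"
    using gamma_int[OF alpha] unfolding g_def by auto
  define s where "s = (\<lambda>n u. indicator {0<..} u * exp (- u) * Gr (u / c n) / c n powr \<alpha>)"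
  have s_alt: "s n u = g u * ((u / c n) powr \<alpha> * Gr (u / c n))" if "u > 0" for n u
  proof -
    have "(u / c n) powr \<alpha> = u powr \<alpha> / c n powr \<alpha>"
      using that cpos[of n] by (simp add: powr_divide)
    moreover have "u powr (- \<alpha>) * u powr \<alpha> = 1"
      using that by (simp add: powr_add[symmetric])
    ultimately show ?thesis
      using that unfolding s_def g_def
      by (simp add: exp_minus field_simps)
  qed
  have s0: "s n u = 0" if "u \<le> 0" for n u
    using that unfolding s_def by simp
  have g0: "g u = 0" if "u \<le> 0" for u
    using that unfolding g_def by (cases "u = 0") auto
  have g_nn: "g u \<ge> 0" for u unfolding g_def by simp
  have integral_s: "integral\<^sup>L lborel (s n) = (1 - L (c n)) / c n powr \<alpha>" for n
  proof -
    have cn: "c n > 0" by (rule cpos)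
    have "(\<integral>\<^sup>+ u. ennreal (s n u) \<partial>lborel)
       = (\<integral>\<^sup>+ u. ennreal (indicator {0<..} u * exp (- u) * Gr (u / c n)) * ennreal (1 / c n powr \<alpha>) \<partial>lborel)"
      using Gr_bounds cn unfolding s_def
      by (intro nn_integral_cong) (simp add: ennreal_mult[symmetric] divide_inverse)
    also have "\<dots> = (\<integral>\<^sup>+ u. ennreal (indicator {0<..} u * exp (- u) * Gr (u / c n)) \<partial>lborel) * ennreal (1 / c n powr \<alpha>)"
      by (rule nn_integral_multc) measurable
    also have "\<dots> = ennreal (1 - L (c n)) * ennreal (1 / c n powr \<alpha>)"
      using Q_scaled[OF cn] by simp
    also have "\<dots> = ennreal ((1 - L (c n)) / c n powr \<alpha>)"
      using Q_nn(2)[OF cn] cn by (simp add: ennreal_mult[symmetric] divide_inverse)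
    finally have e: "(\<integral>\<^sup>+ u. ennreal (s n u) \<partial>lborel) = ennreal ((1 - L (c n)) / c n powr \<alpha>)" .
    have "0 \<le> (1 - L (c n)) / c n powr \<alpha>" using Q_nn(2)[OF cn] by simp
    moreover have "s n \<in> borel_measurable lborel" unfolding s_def by measurable
    moreover have "AE u in lborel. 0 \<le> s n u" using Gr_bounds cn unfolding s_def by simp
    ultimately show ?thesis using e nn_integral_eq_integrable by blast
  qed
  have "(\<lambda>n. integral\<^sup>L lborel (s n)) \<longlonglongrightarrow> integral\<^sup>L lborel (\<lambda>u. C * g u)"
  proof (rule integral_dominated_convergence[where w = "\<lambda>u. M * g u"])
    show "(\<lambda>u. C * g u) \<in> borel_measurable lborel" unfolding g_def by measurable
    show "\<And>n. s n \<in> borel_measurable lborel" unfolding s_def by measurable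
    show "integrable lborel (\<lambda>u. M * g u)" using gi by simp
    show "AE u in lborel. (\<lambda>n. s n u) \<longlonglongrightarrow> C * g u"
    proof (intro AE_I2)
      fix u :: real
      show "(\<lambda>n. s n u) \<longlonglongrightarrow> C * g u"
      proof (cases "u > 0")
        case False
        then show ?thesis using s0 g0 by simp
      next
        case True
        have "filterlim (\<lambda>n. inverse (c n)) at_top sequentially"
          using cpos clim by (intro filterlim_inverse_at_top) auto
        then have "filterlim (\<lambda>n. u * inverse (c n)) at_top sequentially"
          using True by (intro filterlim_tendsto_pos_mult_at_top[OF tendsto_const]) auto
        then have "filterlim (\<lambda>n. u / c n) at_top sequentially" by (simp add: divide_inverse)
        from filterlim_compose[OF tailG this]
        have "(\<lambda>n. (u / c n) powr \<alpha> * Gr (u / c n)) \<longlonglongrightarrow> C" .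
        then have "(\<lambda>n. g u * ((u / c n) powr \<alpha> * Gr (u / c n))) \<longlonglongrightarrow> g u * C"
          by (intro tendsto_mult tendsto_const)
        then show ?thesis using s_alt[OF True] by (simp add: mult.commute)
      qed
    qed
    show "AE u in lborel. norm (s n u) \<le> M * g u" for n
    proof (intro AE_I2)
      fix u :: real
      show "norm (s n u) \<le> M * g u"
      proof (cases "u > 0")
        case False
        then show ?thesis using s0 g0 by simp
      next
        case True
        have "0 \<le> (u / c n) powr \<alpha> * Gr (u / c n)" using Gr_bounds by simp
        moreover have "(u / c n) powr \<alpha> * Gr (u / c n) \<le> M"
          using bnd[of "u / c n"] True cpos[of n] by simp
        ultimately have "norm (s n u) = g u * ((u / c n) powr \<alpha> * Gr (u / c n))"
          and "g u * ((u / c n) powr \<alpha> * Gr (u / c n)) \<le> g u * M"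
          using s_alt[OF True] g_nn[of u] by (auto intro: mult_left_mono)
        then show ?thesis by (simp add: mult.commute)
      qed
    qed
  qed
  then show ?thesis using integral_s gI by simp
qed

end


theorem lemma2p1:
  fixes \<phi> :: "real \<Rightarrow> real" and F :: "real \<Rightarrow> real"
    and \<alpha> K \<delta> lam :: real and a b :: "nat \<Rightarrow> real"
  assumes meas: "set_borel_measurable lborel {0..} \<phi>"
    and nonneg: "\<And>x. x \<ge> 0 \<Longrightarrow> \<phi> x \<ge> 0"
    and int1: "set_integrable lborel {0..} \<phi>" "(LINT s:{0..}|lborel. \<phi> s) = 1"
    and F_def: "\<And>x. F x = (LINT s:{0..x}|lborel. \<phi> s)"
    and alpha: "0 < \<alpha>" "\<alpha> < 1" and Kpos: "K > 0"
    and tail: "((\<lambda>x. \<alpha> * x powr \<alpha> * (1 - F x)) \<longlongrightarrow> K) at_top"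
    and delta_def: "\<delta> = K * Gamma (1 - \<alpha>) / \<alpha>"
    and lam_pos: "lam > 0"
    and a_gt: "\<And>n. a n > 1" and a_lim: "a \<longlonglongrightarrow> 1"
    and a_rate: "(\<lambda>n. real n powr \<alpha> * (a n - 1)) \<longlonglongrightarrow> lam * \<delta>"
    and b_pos: "\<And>n. b n > 0"
    and b_eq: "\<And>n. (LINT s:{0..}|lborel. exp (- b n * s) * a n * \<phi> s) = 1 / a n"
    and b_unique: "\<And>n c. c > 0 \<Longrightarrow> (LINT s:{0..}|lborel. exp (- c * s) * a n * \<phi> s) = 1 / a n \<Longrightarrow> c = b n"
  shows "(\<lambda>n. real n * b n) \<longlonglongrightarrow> (2 * lam) powr (1 / \<alpha>)"
proof -
  note ctx = meas nonneg int1(1) int1(2)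
  define Qf where "Qf c = 1 - L \<phi> c" for c
  have Qnn: "c > 0 \<Longrightarrow> (\<integral>\<^sup>+ s. ennreal ((1 - exp (- c * s)) * Pf \<phi> s) \<partial>lborel) = ennreal (Qf c)" for c
    using Q_nn(1)[OF ctx] unfolding Qf_def by blast
  have Qnn0: "c > 0 \<Longrightarrow> 0 \<le> Qf c" for c
    using Q_nn(2)[OF ctx] unfolding Qf_def by blast
  have Qmono: "Qf c \<le> Qf c'" if "0 < c" "c \<le> c'" for c c'
  proof -
    have "ennreal (Qf c) \<le> ennreal (Qf c')"
      unfolding Qnn[OF that(1), symmetric] Qnn[OF order.strict_trans2[OF that], symmetric]
    proof (intro nn_integral_mono)
      fix s :: real
      show "ennreal ((1 - exp (- c * s)) * Pf \<phi> s) \<le> ennreal ((1 - exp (- c' * s)) * Pf \<phi> s)"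
      proof (cases "s \<ge> 0")
        case True
        then have "exp (- c' * s) \<le> exp (- c * s)" using that by (simp add: mult_right_mono)
        then show ?thesis using Pf_nonneg[OF ctx, of s]
          by (intro ennreal_leI mult_right_mono) auto
      qed (simp add: Pf_def[OF ctx] indicator_def)
    qed
    then show ?thesis using Qnn0[of c'] that by simp
  qed
  have tailG: "((\<lambda>x. x powr \<alpha> * Gr \<phi> x) \<longlongrightarrow> K / \<alpha>) at_top"
  proof -
    have "((\<lambda>x. \<alpha> * x powr \<alpha> * (1 - F x) / \<alpha>) \<longlongrightarrow> K / \<alpha>) at_top"
      by (intro tendsto_divide tail tendsto_const) (use alpha in auto)
    moreover have "eventually (\<lambda>x. \<alpha> * x powr \<alpha> * (1 - F x) / \<alpha> = x powr \<alpha> * Gr \<phi> x) at_top"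
      using eventually_ge_at_top[of "0::real"]
    proof eventually_elim
      case (elim x)
      have "Gr \<phi> x = 1 - F x" using Gn_F(1)[OF ctx elim] Gr_def[OF ctx, of x] F_def[of x] by linarith
      then show ?case using alpha by simp
    qed
    ultimately show ?thesis by (rule Lim_transform_eventually)
  qed
  have Gpos: "Gamma (1 - \<alpha>) > 0" using alpha by (intro Gamma_real_pos) simp
  have dpos: "\<delta> > 0" unfolding delta_def using Kpos alpha Gpos by simp
  have dd: "K / \<alpha> * Gamma (1 - \<alpha>) = \<delta>" unfolding delta_def by simp
  have keyQ: "(\<lambda>n. Qf (c n) / c n powr \<alpha>) \<longlonglongrightarrow> \<delta>" if "\<And>n. c n > 0" "c \<longlonglongrightarrow> 0" for c
    using key[OF ctx alpha tailG that] unfolding Qf_def dd .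
  have Lb: "L \<phi> (b n) = 1 / (a n)^2" for n
  proof -
    have "(LINT s:{0..}|lborel. exp (- b n * s) * a n * \<phi> s) = a n * L \<phi> (b n)"
    proof -
      have "L \<phi> (b n) = integral\<^sup>L lborel (\<lambda>x. indicator {0..} x * (exp (- b n * x) * \<phi> x))"
        using L_def[OF ctx, of "b n"] by (simp add: set_lebesgue_integral_def)
      then have "a n * L \<phi> (b n) = integral\<^sup>L lborel (\<lambda>x. a n * (indicator {0..} x * (exp (- b n * x) * \<phi> x)))"
        by simp
      also have "\<dots> = (LINT s:{0..}|lborel. exp (- b n * s) * a n * \<phi> s)"
        unfolding set_lebesgue_integral_def by (simp add: ac_simps)
      finally show ?thesis by simp
    qed
    then have "a n * L \<phi> (b n) = 1 / a n" using b_eq[of n] by simp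
    then show ?thesis using a_gt[of n] by (simp add: field_simps power2_eq_square)
  qed
  have Qb: "Qf (b n) = (a n - 1) * (a n + 1) / (a n)^2" for n
    unfolding Qf_def Lb using a_gt[of n] by (simp add: field_simps power2_eq_square)
  have Qbpos: "Qf (b n) > 0" for n
    unfolding Qb using a_gt[of n] by simp
  have Qb0: "(\<lambda>n. Qf (b n)) \<longlonglongrightarrow> 0"
  proof -
    have "(\<lambda>n. (a n - 1) * (a n + 1) / (a n)^2) \<longlonglongrightarrow> (1 - 1) * (1 + 1) / 1^2"
      by (intro tendsto_intros a_lim) auto
    then show ?thesis unfolding Qb by simp
  qed
  have b0: "b \<longlonglongrightarrow> 0"
  proof (rule LIMSEQ_I)
    fix r :: real assume r: "0 < r"
    define c where "c m = r / (real m + 2)" for m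
    have cpos: "c m > 0" for m unfolding c_def using r by simp
    have "filterlim (\<lambda>m. 2 + real m) at_top sequentially"
      by (rule filterlim_tendsto_add_at_top[OF tendsto_const filterlim_real_sequentially])
    then have "filterlim (\<lambda>m. real m + 2) at_top sequentially" by (simp add: add.commute)
    then have clim: "c \<longlonglongrightarrow> 0" unfolding c_def
      by (intro tendsto_divide_0[OF tendsto_const] filterlim_at_top_imp_at_infinity)
    have "eventually (\<lambda>m. Qf (c m) / c m powr \<alpha> > 0) sequentially"
      using order_tendstoD(1)[OF keyQ[OF cpos clim] dpos] .
    then obtain m where "Qf (c m) / c m powr \<alpha> > 0" by (meson eventually_sequentially order.refl)
    then have qm: "Qf (c m) > 0" using cpos[of m] by (simp add: zero_less_divide_iff)
    have cm: "c m < r" unfolding c_def using r by (simp add: field_simps add_pos_nonneg)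
    have "eventually (\<lambda>n. Qf (b n) < Qf (c m)) sequentially"
      using order_tendstoD(2)[OF Qb0 qm] .
    then obtain N where N: "\<And>n. n \<ge> N \<Longrightarrow> Qf (b n) < Qf (c m)" by (auto simp: eventually_sequentially)
    show "\<exists>no. \<forall>n\<ge>no. norm (b n - 0) < r"
    proof (intro exI allI impI)
      fix n assume "n \<ge> N"
      then have "Qf (b n) < Qf (c m)" by (rule N)
      then have "b n < c m" using Qmono[OF cpos[of m], of "b n"] by force
      then show "norm (b n - 0) < r" using b_pos[of n] cm by simp
    qed
  qed
  have lim1: "(\<lambda>n. Qf (b n) / b n powr \<alpha>) \<longlonglongrightarrow> \<delta>" by (rule keyQ[OF b_pos b0])
  have lim2: "(\<lambda>n. real n powr \<alpha> * Qf (b n)) \<longlonglongrightarrow> lam * \<delta> * ((1 + 1) / 1^2)"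
  proof -
    have "(\<lambda>n. (real n powr \<alpha> * (a n - 1)) * ((a n + 1) / (a n)^2)) \<longlonglongrightarrow> lam * \<delta> * ((1 + 1) / 1^2)"
      by (intro tendsto_mult a_rate tendsto_intros a_lim) auto
    then show ?thesis unfolding Qb by (simp add: field_simps)
  qed
  have lim3: "(\<lambda>n. (real n powr \<alpha> * Qf (b n)) / (Qf (b n) / b n powr \<alpha>)) \<longlonglongrightarrow> (lam * \<delta> * ((1 + 1) / 1^2)) / \<delta>"
    by (intro tendsto_divide lim1 lim2) (use dpos in simp)
  have lim4: "(\<lambda>n. (real n * b n) powr \<alpha>) \<longlonglongrightarrow> 2 * lam"
  proof -
    have "(\<lambda>n. (real n powr \<alpha> * Qf (b n)) / (Qf (b n) / b n powr \<alpha>)) = (\<lambda>n. (real n * b n) powr \<alpha>)"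
    proof
      fix n
      have "b n powr \<alpha> > 0" using b_pos[of n] by simp
      then show "(real n powr \<alpha> * Qf (b n)) / (Qf (b n) / b n powr \<alpha>) = (real n * b n) powr \<alpha>"
        using Qbpos[of n] b_pos[of n] by (simp add: powr_mult field_simps)
    qed
    moreover have "(lam * \<delta> * ((1 + 1) / 1^2)) / \<delta> = 2 * lam" using dpos by simp
    ultimately show ?thesis using lim3 by simp
  qed
  have "(\<lambda>n. ((real n * b n) powr \<alpha>) powr (1 / \<alpha>)) \<longlonglongrightarrow> (2 * lam) powr (1 / \<alpha>)"
    by (intro tendsto_powr lim4 tendsto_const) (use lam_pos in simp)
  moreover have "((real n * b n) powr \<alpha>) powr (1 / \<alpha>) = real n * b n" for n
  proof (cases "n = 0")
    case False
    then have "real n * b n > 0" using b_pos[of n] by simp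
    then show ?thesis using alpha by (simp add: powr_powr)
  qed simp
  ultimately show ?thesis by simp
qed

end
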